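(* Let $n\ge1$, $\alpha\in[0,n]$, and let $\Omega_1,\Omega_2\subset\mathbb{R}^n$ be disjoint Lebesgue measurable sets with $|\Omega_1|<\infty$. Let $\Gamma_t=\{x\in\Omega_1:\mathrm{dist}(x,\Omega_2)\le t\}$ and suppose there is $C_1>0$ with $|\Gamma_t|\le C_1\min\{t^{n-\alpha},1\}$ for all $t>0$. Let $J\ge0$ be a function on $\mathbb{R}^n$ with $\int_{\mathbb{R}^n}J(z)|z|^{n-\alpha}\,dz\le C_J<\infty$. Then for all $t>0$, $$\int_{\Omega_1\times\Omega_2}J\Big(\frac{x-y}{t}\Big)\,dx\,dy\le C_1C_J\,t^{2n-\alpha}.$$
   Context: $|\cdot|$ denotes Lebesgue measure. *)

theory Defs
  imports "HOL-Analysis.Analysis"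
begin

end

theory Submission
  imports Defs
begin

lemma aff:
  fixes g :: "'a::euclidean_space \<Rightarrow> ennreal" and c :: real
  assumes g: "g \<in> borel_measurable borel" and c: "c \<noteq> 0"
  shows "(\<integral>\<^sup>+y. g y \<partial>lborel) = ennreal (\<bar>c\<bar>^DIM('a)) * (\<integral>\<^sup>+z. g (t + c *\<^sub>R z) \<partial>lborel)"
proof -
  have "(\<integral>\<^sup>+y. g y \<partial>lborel) = (\<integral>\<^sup>+y. g y \<partial>(density (distr lborel borel (\<lambda>x. t + c *\<^sub>R x)) (\<lambda>_. \<bar>c\<bar>^DIM('a))))"
    using lborel_affine[OF c, of t] by simp
  also have "\<dots> = (\<integral>\<^sup>+y. ennreal (\<bar>c\<bar>^DIM('a)) * g y \<partial>(distr lborel borel (\<lambda>x. t + c *\<^sub>R x)))"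
    using g by (subst nn_integral_density) auto
  also have "\<dots> = (\<integral>\<^sup>+z. ennreal (\<bar>c\<bar>^DIM('a)) * g (t + c *\<^sub>R z) \<partial>lborel)"
    using g by (subst nn_integral_distr) auto
  also have "\<dots> = ennreal (\<bar>c\<bar>^DIM('a)) * (\<integral>\<^sup>+z. g (t + c *\<^sub>R z) \<partial>lborel)"
    using g by (subst nn_integral_cmult) auto
  finally show ?thesis .
qed

theorem lemma2p1:
  fixes \<Omega>1 \<Omega>2 :: "(real ^ 'n) set"
    and \<alpha> C1 CJ :: real
    and J :: "real ^ 'n \<Rightarrow> real"
  assumes alpha: "0 \<le> \<alpha>" "\<alpha> \<le> real CARD('n)"
    and meas1: "\<Omega>1 \<in> sets lebesgue" and meas2: "\<Omega>2 \<in> sets lebesgue"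
    and disj: "\<Omega>1 \<inter> \<Omega>2 = {}"
    and fin: "emeasure lebesgue \<Omega>1 < \<infinity>"
    and C1: "C1 > 0"
    and Gamma: "\<And>t. t > 0 \<Longrightarrow>
        emeasure lebesgue {x \<in> \<Omega>1. infdist x \<Omega>2 \<le> t}
          \<le> ennreal (C1 * min (t powr (real CARD('n) - \<alpha>)) 1)"
    and Jnn: "\<And>z. J z \<ge> 0"
    and Jmeas: "J \<in> borel_measurable lebesgue"
    and JCJ: "(\<integral>\<^sup>+ z. ennreal (J z * norm z powr (real CARD('n) - \<alpha>)) \<partial>lebesgue) \<le> ennreal CJ"
  shows "\<And>t. t > 0 \<Longrightarrow>
     (\<integral>\<^sup>+ p. indicator (\<Omega>1 \<times> \<Omega>2) p * ennreal (J ((1 / t) *\<^sub>R (fst p - snd p))) \<partial>lebesgue)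
       \<le> ennreal (C1 * CJ * t powr (2 * real CARD('n) - \<alpha>))"
proof -
  fix t :: real assume t: "t > 0"
  define n where "n = real CARD('n)"
  define M1 where "M1 = main_part lborel \<Omega>1"
  obtain N1 where N1: "N1 \<in> null_sets lborel" "null_part lborel \<Omega>1 \<subseteq> N1"
    using null_part[OF meas1] by blast
  have M1sub: "M1 \<subseteq> \<Omega>1" unfolding M1_def using main_part_null_part_Un[OF meas1] by blast
  have M1sets: "M1 \<in> sets borel" unfolding M1_def using main_part_sets[OF meas1] by simp
  define B1 where "B1 = M1 \<union> N1"
  have B1sets[measurable]: "B1 \<in> sets borel" unfolding B1_def using M1sets N1 by auto
  have Om1B1: "\<Omega>1 \<subseteq> B1" unfolding B1_def M1_def using main_part_null_part_Un[OF meas1] N1 by blast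
  obtain g where g[measurable]: "g \<in> borel_measurable lborel" and gae: "AE x in lborel. J x = g x"
    using completion_ex_borel_measurable_real[OF Jmeas] by blast
  obtain N where N: "N \<in> null_sets lborel" "{x\<in>space lborel. \<not> J x = g x} \<subseteq> N"
    by (rule AE_E[OF gae]) (metis null_setsI space_borel space_lborel sets_lborel)
  have Nsets[measurable]: "N \<in> sets borel" using N by auto
  define G where "G z = (if z \<in> N then \<infinity> else ennreal (g z))" for z
  have Gm[measurable]: "G \<in> borel_measurable borel" unfolding G_def by measurable
  have JG: "ennreal (J z) \<le> G z" for z using N by (auto simp: G_def) (metis (mono_tags) mem_Collect_eq order_refl subsetD)
  define h where "h p = indicator B1 (fst p) * indicator {p. infdist (fst p) \<Omega>2 \<le> norm (fst p - snd p)} p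
     * G ((1/t) *\<^sub>R (fst p - snd p))" for p :: "(real^'n) \<times> (real^'n)"
  have cl: "closed {p::(real^'n) \<times> (real^'n). infdist (fst p) \<Omega>2 \<le> norm (fst p - snd p)}"
    by (intro closed_Collect_le continuous_intros continuous_on_infdist)
  have cl'[measurable]: "{p::(real^'n) \<times> (real^'n). infdist (fst p) \<Omega>2 \<le> norm (fst p - snd p)} \<in> sets (lborel \<Otimes>\<^sub>M lborel)"
    unfolding lborel_prod using borel_closed[OF cl] by simp
  have hm: "h \<in> borel_measurable (lborel \<Otimes>\<^sub>M lborel)"
    unfolding h_def by measurable
  have "(\<integral>\<^sup>+ p. indicator (\<Omega>1 \<times> \<Omega>2) p * ennreal (J ((1 / t) *\<^sub>R (fst p - snd p))) \<partial>lebesgue)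
      = (\<integral>\<^sup>+ p. indicator (\<Omega>1 \<times> \<Omega>2) p * ennreal (J ((1 / t) *\<^sub>R (fst p - snd p))) \<partial>lborel)"
    by (rule nn_integral_completion)
  also have "\<dots> \<le> (\<integral>\<^sup>+ p. h p \<partial>lborel)"
  proof (rule nn_integral_mono)
    fix p :: "(real^'n) \<times> (real^'n)"
    obtain x y where p: "p = (x, y)" by fastforce
    show "indicator (\<Omega>1 \<times> \<Omega>2) p * ennreal (J ((1 / t) *\<^sub>R (fst p - snd p))) \<le> h p"
    proof (cases "x \<in> \<Omega>1 \<and> y \<in> \<Omega>2")
      case True
      then have "infdist x \<Omega>2 \<le> norm (x - y)" using infdist_le[of y \<Omega>2 x] by (simp add: dist_norm)
      then show ?thesis using True Om1B1 JG by (auto simp: h_def p indicator_def)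
    qed (auto simp: p indicator_def)
  qed
  finally have A: "(\<integral>\<^sup>+ p. indicator (\<Omega>1 \<times> \<Omega>2) p * ennreal (J ((1 / t) *\<^sub>R (fst p - snd p))) \<partial>lebesgue) \<le> (\<integral>\<^sup>+ p. h p \<partial>lborel)" .
  define H where "H x z = indicator B1 x * indicator {z. infdist x \<Omega>2 \<le> t * norm z} z * G z"
    for x z :: "real^'n"
  have cl2: "closed {p::(real^'n) \<times> (real^'n). infdist (fst p) \<Omega>2 \<le> t * norm (snd p)}"
    by (intro closed_Collect_le continuous_intros continuous_on_infdist)
  have cl2'[measurable]: "{p::(real^'n) \<times> (real^'n). infdist (fst p) \<Omega>2 \<le> t * norm (snd p)} \<in> sets (lborel \<Otimes>\<^sub>M lborel)"
    unfolding lborel_prod using borel_closed[OF cl2] by simp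
  have Hm: "case_prod H \<in> borel_measurable (lborel \<Otimes>\<^sub>M lborel)"
  proof -
    have "case_prod H = (\<lambda>p. indicator B1 (fst p) * indicator {p::(real^'n) \<times> (real^'n). infdist (fst p) \<Omega>2 \<le> t * norm (snd p)} p * G (snd p))"
      by (auto simp: H_def fun_eq_iff indicator_def)
    also have "\<dots> \<in> borel_measurable (lborel \<Otimes>\<^sub>M lborel)" by measurable
    finally show ?thesis .
  qed
  have d: "DIM(real^'n) = CARD('n)" by simp
  have inner: "(\<integral>\<^sup>+y. h (x,y) \<partial>lborel) = ennreal (t ^ CARD('n)) * (\<integral>\<^sup>+z. H x z \<partial>lborel)" for x
  proof -
    have m: "(\<lambda>y. h (x,y)) \<in> borel_measurable borel"
      using measurable_compose[OF measurable_Pair1' hm, of x] by simp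
    have "(\<integral>\<^sup>+y. h (x,y) \<partial>lborel) = ennreal (\<bar>-t\<bar>^DIM(real^'n)) * (\<integral>\<^sup>+z. h (x, x + (-t) *\<^sub>R z) \<partial>lborel)"
      by (rule aff[OF m]) (use t in simp)
    also have "(\<lambda>z. h (x, x + (-t) *\<^sub>R z)) = H x"
      using t by (auto simp: fun_eq_iff h_def H_def indicator_def)
    finally show ?thesis using t by simp
  qed
  have "(\<integral>\<^sup>+ p. h p \<partial>lborel) = (\<integral>\<^sup>+ p. h p \<partial>(lborel \<Otimes>\<^sub>M lborel))"
    by (simp only: lborel_prod)
  also have "\<dots> = (\<integral>\<^sup>+x. \<integral>\<^sup>+y. h (x,y) \<partial>lborel \<partial>lborel)"
    by (rule lborel.nn_integral_fst[OF hm, symmetric])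
  also have "\<dots> = (\<integral>\<^sup>+x. ennreal (t ^ CARD('n)) * (\<integral>\<^sup>+z. H x z \<partial>lborel) \<partial>lborel)"
    by (simp add: inner)
  also have "\<dots> = ennreal (t ^ CARD('n)) * (\<integral>\<^sup>+x. \<integral>\<^sup>+z. H x z \<partial>lborel \<partial>lborel)"
    by (rule nn_integral_cmult) (use Hm in measurable)
  also have "(\<integral>\<^sup>+x. \<integral>\<^sup>+z. H x z \<partial>lborel \<partial>lborel) = (\<integral>\<^sup>+z. \<integral>\<^sup>+x. H x z \<partial>lborel \<partial>lborel)"
    by (rule lborel_pair.Fubini'[OF Hm, symmetric])
  finally have hint: "(\<integral>\<^sup>+ p. h p \<partial>lborel) = ennreal (t ^ CARD('n)) * (\<integral>\<^sup>+z. \<integral>\<^sup>+x. H x z \<partial>lborel \<partial>lborel)" .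
  define a where "a = real CARD('n) - \<alpha>"
  have Ebound: "emeasure lborel (B1 \<inter> {x. infdist x \<Omega>2 \<le> s}) \<le> ennreal (C1 * s powr a)" if s: "s > 0" for s
  proof -
    have cls: "closed {x::real^'n. infdist x \<Omega>2 \<le> s}"
      by (intro closed_Collect_le continuous_intros continuous_on_infdist)
    have Sb: "B1 \<inter> {x. infdist x \<Omega>2 \<le> s} \<in> sets lborel" using borel_closed[OF cls] by auto
    have Ab: "{x \<in> \<Omega>1. infdist x \<Omega>2 \<le> s} \<in> sets lebesgue"
    proof -
      have "{x \<in> \<Omega>1. infdist x \<Omega>2 \<le> s} = \<Omega>1 \<inter> {x. infdist x \<Omega>2 \<le> s}" by auto
      moreover have "{x::real^'n. infdist x \<Omega>2 \<le> s} \<in> sets lebesgue" using borel_closed[OF cls] by auto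
      ultimately show ?thesis using meas1 by auto
    qed
    have N1l: "N1 \<in> sets lebesgue" "emeasure lebesgue N1 = 0" using N1 null_setsD2[OF N1(1)] null_sets_completion[of N1 lborel] by (auto simp: null_setsD1)
    have "emeasure lborel (B1 \<inter> {x. infdist x \<Omega>2 \<le> s}) = emeasure lebesgue (B1 \<inter> {x. infdist x \<Omega>2 \<le> s})"
      using Sb by (simp add: emeasure_completion)
    also have "\<dots> \<le> emeasure lebesgue ({x \<in> \<Omega>1. infdist x \<Omega>2 \<le> s} \<union> N1)"
      by (rule emeasure_mono) (use M1sub Ab N1l in \<open>auto simp: B1_def\<close>)
    also have "\<dots> \<le> emeasure lebesgue {x \<in> \<Omega>1. infdist x \<Omega>2 \<le> s} + emeasure lebesgue N1"
      by (rule emeasure_subadditive) (use Ab N1l in auto)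
    also have "\<dots> \<le> ennreal (C1 * min (s powr (real CARD('n) - \<alpha>)) 1)" using Gamma[OF s] N1l by simp
    also have "\<dots> \<le> ennreal (C1 * s powr a)"
      using C1 by (intro ennreal_leI mult_left_mono) (auto simp: a_def)
    finally show ?thesis .
  qed
  have Hx: "(\<integral>\<^sup>+x. H x z \<partial>lborel) = G z * emeasure lborel (B1 \<inter> {x. infdist x \<Omega>2 \<le> t * norm z})" for z
  proof -
    have clz: "closed {x::real^'n. infdist x \<Omega>2 \<le> t * norm z}"
      by (intro closed_Collect_le continuous_intros continuous_on_infdist)
    have "(\<integral>\<^sup>+x. H x z \<partial>lborel) = (\<integral>\<^sup>+x. G z * indicator (B1 \<inter> {x. infdist x \<Omega>2 \<le> t * norm z}) x \<partial>lborel)"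
      by (intro nn_integral_cong) (auto simp: H_def indicator_def)
    also have "\<dots> = G z * emeasure lborel (B1 \<inter> {x. infdist x \<Omega>2 \<le> t * norm z})"
      using borel_closed[OF clz] by (intro nn_integral_cmult_indicator) auto
    finally show ?thesis .
  qed
  have "(\<integral>\<^sup>+z. \<integral>\<^sup>+x. H x z \<partial>lborel \<partial>lborel) \<le> (\<integral>\<^sup>+z. ennreal (C1 * t powr a) * (G z * ennreal (norm z powr a)) \<partial>lborel)"
  proof (rule nn_integral_mono_AE)
    show "AE z in lborel. (\<integral>\<^sup>+x. H x z \<partial>lborel) \<le> ennreal (C1 * t powr a) * (G z * ennreal (norm z powr a))"
      using AE_lborel_singleton[of 0]
    proof eventually_elim
      case (elim z)
      then have pos: "t * norm z > 0" using t by simp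
      have "(\<integral>\<^sup>+x. H x z \<partial>lborel) \<le> G z * ennreal (C1 * (t * norm z) powr a)"
        unfolding Hx by (intro mult_left_mono Ebound pos) simp
      also have "C1 * (t * norm z) powr a = (C1 * t powr a) * norm z powr a"
        using t by (simp add: powr_mult)
      also have "G z * ennreal (C1 * t powr a * norm z powr a) = ennreal (C1 * t powr a) * (G z * ennreal (norm z powr a))"
        using C1 by (simp add: ennreal_mult mult_ac)
      finally show ?case .
    qed
  qed
  also have "\<dots> = ennreal (C1 * t powr a) * (\<integral>\<^sup>+z. G z * ennreal (norm z powr a) \<partial>lborel)"
    by (rule nn_integral_cmult) measurable
  also have "(\<integral>\<^sup>+z. G z * ennreal (norm z powr a) \<partial>lborel) = (\<integral>\<^sup>+z. ennreal (J z * norm z powr a) \<partial>lborel)"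
  proof (rule nn_integral_cong_AE)
    show "AE z in lborel. G z * ennreal (norm z powr a) = ennreal (J z * norm z powr a)"
      using AE_not_in[OF N(1)]
    proof eventually_elim
      case (elim z)
      then have "J z = g z" using N(2) by auto
      then show ?case using elim Jnn[of z] by (simp add: G_def ennreal_mult)
    qed
  qed
  also have "\<dots> = (\<integral>\<^sup>+z. ennreal (J z * norm z powr a) \<partial>lebesgue)"
    by (rule nn_integral_completion[symmetric])
  also have "\<dots> \<le> ennreal CJ" using JCJ by (simp add: a_def)
  finally have zint: "(\<integral>\<^sup>+z. \<integral>\<^sup>+x. H x z \<partial>lborel \<partial>lborel) \<le> ennreal (C1 * t powr a) * ennreal CJ"
    by (simp add: mult_left_mono)
  have "(\<integral>\<^sup>+ p. indicator (\<Omega>1 \<times> \<Omega>2) p * ennreal (J ((1 / t) *\<^sub>R (fst p - snd p))) \<partial>lebesgue)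
       \<le> ennreal (t ^ CARD('n)) * (ennreal (C1 * t powr a) * ennreal CJ)"
  proof -
    have "(\<integral>\<^sup>+ p. h p \<partial>lborel) \<le> ennreal (t ^ CARD('n)) * (ennreal (C1 * t powr a) * ennreal CJ)"
      unfolding hint by (rule mult_left_mono[OF zint]) simp
    then show ?thesis using A by (rule order_trans[rotated])
  qed
  also have "\<dots> = ennreal (C1 * CJ * t powr (2 * real CARD('n) - \<alpha>))"
  proof -
    have "t ^ CARD('n) * (C1 * t powr a) = C1 * t powr (2 * real CARD('n) - \<alpha>)"
      using t by (simp add: a_def powr_realpow[symmetric] powr_add[symmetric] algebra_simps)
    moreover have "0 \<le> t ^ CARD('n) * (C1 * t powr a)" using t C1 by simp
    moreover have "0 \<le> C1 * t powr a" using C1 by simp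
    moreover have "0 \<le> t ^ CARD('n)" using t by simp
    ultimately have "ennreal (t ^ CARD('n)) * (ennreal (C1 * t powr a) * ennreal CJ)
        = ennreal (t ^ CARD('n) * (C1 * t powr a)) * ennreal CJ"
      by (simp add: ennreal_mult mult.assoc)
    also have "\<dots> = ennreal (t ^ CARD('n) * (C1 * t powr a) * CJ)"
      using \<open>0 \<le> t ^ CARD('n) * (C1 * t powr a)\<close> by (rule ennreal_mult'[symmetric])
    also have "\<dots> = ennreal (C1 * CJ * t powr (2 * real CARD('n) - \<alpha>))"
      by (rule arg_cong[where f=ennreal]) (metis \<open>t ^ CARD('n) * (C1 * t powr a) = C1 * t powr (2 * real CARD('n) - \<alpha>)\<close> mult.commute mult.left_commute)
    finally show ?thesis .
  qed
  finally show "(\<integral>\<^sup>+ p. indicator (\<Omega>1 \<times> \<Omega>2) p * ennreal (J ((1 / t) *\<^sub>R (fst p - snd p))) \<partial>lebesgue)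
       \<le> ennreal (C1 * CJ * t powr (2 * real CARD('n) - \<alpha>))" .
qed
end
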